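(* Let $\mathcal{G}$ be a Grothendieck category, $X\in\mathcal{G}$, $\sigma$ an ordinal, $(X_\alpha\mid\alpha\le\sigma)$ a chain of subobjects of $X$ with $X_0=0$, $X_\sigma=X$, $X_\mu=\bigcup_{\alpha<\mu}X_\alpha$ for limit $\mu\le\sigma$, and let $(A_\alpha\mid\alpha<\sigma)$ be subobjects of $X$ with $X_{\alpha+1}=X_\alpha+A_\alpha$ for all $\alpha<\sigma$. If $S\subseteq\sigma$ is closed, then $\ell(S)\cap X_\alpha=\ell(S\cap\alpha)$ for every $\alpha<\sigma$.
   Context: For $S\subseteq\sigma$ (with $\sigma$ identified with the set of ordinals $<\sigma$), $\ell(S)=\sum_{\alpha\in S}A_\alpha\in\mathrm{Subobj}(X)$. A subset $S\subseteq\sigma$ is called closed if every $\alpha\in S$ satisfies $X_\alpha\cap A_\alpha\subseteq\sum_{\gamma\in S,\,\gamma<\alpha}A_\gamma$. Sums, intersections and direct unions are taken in the lattice $\mathrm{Subobj}(X)$ of subobjects of $X$. *)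

theory Defs
  imports Main
begin

text \<open>The lattice Subobj(X) of subobjects of an object X of a Grothendieck category is
  abstracted as a complete lattice (top = X, bot = 0, sup = sum, inf = intersection,
  Sup = sum of a family) which is modular and upper continuous (AB5: intersection
  commutes with direct unions).\<close>

definition modular_lattice :: "'a::complete_lattice itself \<Rightarrow> bool" where
  "modular_lattice _ \<longleftrightarrow>
     (\<forall>x y z :: 'a. x \<le> z \<longrightarrow> sup x (inf y z) = inf (sup x y) z)"

definition directed_set :: "'a::complete_lattice set \<Rightarrow> bool" where
  "directed_set D \<longleftrightarrow> D \<noteq> {} \<and> (\<forall>x\<in>D. \<forall>y\<in>D. \<exists>z\<in>D. x \<le> z \<and> y \<le> z)"

definition upper_continuous :: "'a::complete_lattice itself \<Rightarrow> bool" where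
  "upper_continuous _ \<longleftrightarrow>
     (\<forall>(a::'a) D. directed_set D \<longrightarrow> inf a (Sup D) = (SUP d\<in>D. inf a d))"

text \<open>Ordinals \<open>\<le> \<sigma>\<close> are modelled as the initial segment \<open>{..\<sigma>}\<close> of a well-ordered type.\<close>

definition succ_idx :: "'i::wellorder \<Rightarrow> 'i" where
  "succ_idx \<alpha> = (LEAST \<beta>. \<alpha> < \<beta>)"

definition is_limit_idx :: "'i::wellorder \<Rightarrow> bool" where
  "is_limit_idx \<mu> \<longleftrightarrow> (\<exists>\<beta>. \<beta> < \<mu>) \<and> (\<forall>\<beta><\<mu>. \<exists>\<gamma>. \<beta> < \<gamma> \<and> \<gamma> < \<mu>)"

definition ell :: "('i \<Rightarrow> 'a::complete_lattice) \<Rightarrow> 'i set \<Rightarrow> 'a" where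
  "ell A S = (SUP \<alpha>\<in>S. A \<alpha>)"

definition closed_idx ::
  "('i::wellorder \<Rightarrow> 'a::complete_lattice) \<Rightarrow> ('i \<Rightarrow> 'a) \<Rightarrow> 'i \<Rightarrow> 'i set \<Rightarrow> bool" where
  "closed_idx X A \<sigma> S \<longleftrightarrow> S \<subseteq> {..<\<sigma>} \<and>
     (\<forall>\<alpha>\<in>S. inf (X \<alpha>) (A \<alpha>) \<le> (SUP \<gamma>\<in>{\<gamma>\<in>S. \<gamma> < \<alpha>}. A \<gamma>))"

end

theory Submission
  imports Defs
begin

lemma ell_mono: "S \<subseteq> T \<Longrightarrow> ell A S \<le> ell A T"
  unfolding ell_def by (rule SUP_subset_mono) auto

theorem lemma2p3:
  fixes X A :: "'i::wellorder \<Rightarrow> 'a::complete_lattice"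
    and \<sigma> :: 'i and S :: "'i set"
  assumes modular: "modular_lattice TYPE('a)"
    and ab5: "upper_continuous TYPE('a)"
    and chain: "\<And>\<alpha> \<beta>. \<alpha> \<le> \<beta> \<Longrightarrow> \<beta> \<le> \<sigma> \<Longrightarrow> X \<alpha> \<le> X \<beta>"
    and zero: "\<And>\<alpha>. \<not> (\<exists>\<beta>. \<beta> < \<alpha>) \<Longrightarrow> X \<alpha> = bot"
    and top: "X \<sigma> = top"
    and limit: "\<And>\<mu>. \<mu> \<le> \<sigma> \<Longrightarrow> is_limit_idx \<mu> \<Longrightarrow> X \<mu> = (SUP \<alpha>\<in>{..<\<mu>}. X \<alpha>)"
    and succ: "\<And>\<alpha>. \<alpha> < \<sigma> \<Longrightarrow> X (succ_idx \<alpha>) = sup (X \<alpha>) (A \<alpha>)"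
    and closed: "closed_idx X A \<sigma> S"
  shows "\<forall>\<alpha><\<sigma>. inf (ell A S) (X \<alpha>) = ell A (S \<inter> {..<\<alpha>})"
proof -
  have Sl: "S \<subseteq> {..<\<sigma>}" and cl: "\<And>\<alpha>. \<alpha> \<in> S \<Longrightarrow> inf (X \<alpha>) (A \<alpha>) \<le> (SUP \<gamma>\<in>{\<gamma>\<in>S. \<gamma> < \<alpha>}. A \<gamma>)"
    using closed unfolding closed_idx_def by auto
  have Ale: "A \<delta> \<le> X \<gamma>" if "\<delta> < \<gamma>" "\<gamma> \<le> \<sigma>" for \<delta> \<gamma>
  proof -
    have s1: "\<delta> < succ_idx \<delta>" unfolding succ_idx_def by (rule LeastI) (rule that(1))
    have s2: "succ_idx \<delta> \<le> \<gamma>" unfolding succ_idx_def by (rule Least_le) (rule that(1))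
    have "A \<delta> \<le> X (succ_idx \<delta>)" using succ[of \<delta>] that by auto
    also have "\<dots> \<le> X \<gamma>" using chain s2 that by auto
    finally show ?thesis .
  qed
  have ellX: "ell A (S \<inter> {..<\<gamma>}) \<le> X \<gamma>" if "\<gamma> \<le> \<sigma>" for \<gamma>
    unfolding ell_def using Ale that by (auto intro!: SUP_least)
  have main: "\<forall>\<alpha>\<le>\<beta>. inf (ell A (S \<inter> {..<\<beta>})) (X \<alpha>) \<le> ell A (S \<inter> {..<\<alpha>})" if "\<beta> \<le> \<sigma>" for \<beta>
    using that
  proof (induction \<beta> rule: less_induct)
    case (less \<beta>)
    show ?case
    proof (intro allI impI)
      fix \<alpha> assume a\<beta>: "\<alpha> \<le> \<beta>"
      show "inf (ell A (S \<inter> {..<\<beta>})) (X \<alpha>) \<le> ell A (S \<inter> {..<\<alpha>})"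
      proof (cases "\<alpha> = \<beta>")
        case True then show ?thesis by (simp add: inf.coboundedI1)
      next
        case False
        then have ab: "\<alpha> < \<beta>" using a\<beta> by simp
        show ?thesis
        proof (cases "\<exists>\<gamma><\<beta>. \<forall>\<delta><\<beta>. \<delta> \<le> \<gamma>")
          case True
          then obtain \<gamma> where g: "\<gamma> < \<beta>" "\<forall>\<delta><\<beta>. \<delta> \<le> \<gamma>" by blast
          have ag: "\<alpha> \<le> \<gamma>" using g ab by auto
          have gs: "\<gamma> \<le> \<sigma>" using g less.prems by auto
          have IH: "inf (ell A (S \<inter> {..<\<gamma>})) (X \<alpha>) \<le> ell A (S \<inter> {..<\<alpha>})"
            using less.IH[OF g(1) gs] ag by blast
          have key: "inf (ell A (S \<inter> {..<\<beta>})) (X \<gamma>) \<le> ell A (S \<inter> {..<\<gamma>})"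
          proof (cases "\<gamma> \<in> S")
            case True
            have "S \<inter> {..<\<beta>} = insert \<gamma> (S \<inter> {..<\<gamma>})"
              using g True by (auto simp: le_less)
            then have e: "ell A (S \<inter> {..<\<beta>}) = sup (ell A (S \<inter> {..<\<gamma>})) (A \<gamma>)"
              unfolding ell_def by (simp add: sup_commute)
            have "inf (sup (ell A (S \<inter> {..<\<gamma>})) (A \<gamma>)) (X \<gamma>)
                = sup (ell A (S \<inter> {..<\<gamma>})) (inf (A \<gamma>) (X \<gamma>))"
              using modular ellX[OF gs] unfolding modular_lattice_def by metis
            also have "inf (A \<gamma>) (X \<gamma>) \<le> ell A (S \<inter> {..<\<gamma>})"
            proof -
              have "{\<delta>\<in>S. \<delta> < \<gamma>} = S \<inter> {..<\<gamma>}" by auto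
              then show ?thesis using cl[OF True] unfolding ell_def by (simp add: inf_commute)
            qed
            then have "sup (ell A (S \<inter> {..<\<gamma>})) (inf (A \<gamma>) (X \<gamma>)) = ell A (S \<inter> {..<\<gamma>})"
              by (simp add: sup_absorb1)
            finally show ?thesis using e by simp
          next
            case False
            have "S \<inter> {..<\<beta>} = S \<inter> {..<\<gamma>}"
              using g False by (auto simp: le_less)
            then show ?thesis by (simp add: inf.coboundedI1)
          qed
          have "inf (ell A (S \<inter> {..<\<beta>})) (X \<alpha>) \<le> inf (inf (ell A (S \<inter> {..<\<beta>})) (X \<gamma>)) (X \<alpha>)"
            using chain[OF ag gs] by (simp add: le_infI1 inf.absorb2 inf_assoc)
          also have "\<dots> \<le> inf (ell A (S \<inter> {..<\<gamma>})) (X \<alpha>)" using key by (rule inf_mono) simp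
          also have "\<dots> \<le> ell A (S \<inter> {..<\<alpha>})" by (rule IH)
          finally show ?thesis .
        next
          case False
          then have lim: "\<And>\<gamma>. \<gamma> < \<beta> \<Longrightarrow> \<exists>\<gamma>'. \<gamma> < \<gamma>' \<and> \<gamma>' < \<beta>"
            using not_le by blast
          define D where "D = (\<lambda>\<delta>. ell A (S \<inter> {..<\<delta>})) ` {\<alpha>..<\<beta>}"
          have dir: "directed_set D"
            unfolding directed_set_def D_def
          proof (intro conjI ballI)
            show "(\<lambda>\<delta>. ell A (S \<inter> {..<\<delta>})) ` {\<alpha>..<\<beta>} \<noteq> {}" using ab by auto
          next
            fix x y assume "x \<in> (\<lambda>\<delta>. ell A (S \<inter> {..<\<delta>})) ` {\<alpha>..<\<beta>}"
              "y \<in> (\<lambda>\<delta>. ell A (S \<inter> {..<\<delta>})) ` {\<alpha>..<\<beta>}"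
            then obtain d1 d2 where d: "d1 \<in> {\<alpha>..<\<beta>}" "d2 \<in> {\<alpha>..<\<beta>}"
              "x = ell A (S \<inter> {..<d1})" "y = ell A (S \<inter> {..<d2})" by auto
            show "\<exists>z\<in>(\<lambda>\<delta>. ell A (S \<inter> {..<\<delta>})) ` {\<alpha>..<\<beta>}. x \<le> z \<and> y \<le> z"
              apply (rule bexI[where x="ell A (S \<inter> {..<max d1 d2})"])
              using d by (auto intro!: ell_mono simp: max_def)
          qed
          have sup: "ell A (S \<inter> {..<\<beta>}) \<le> Sup D"
            unfolding ell_def
          proof (rule SUP_least)
            fix \<gamma> assume "\<gamma> \<in> S \<inter> {..<\<beta>}"
            then obtain \<gamma>' where gg: "\<gamma> \<in> S" "\<gamma> < \<gamma>'" "\<gamma>' < \<beta>" using lim by blast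
            let ?d = "max \<alpha> \<gamma>'"
            have "A \<gamma> \<le> ell A (S \<inter> {..<?d})" unfolding ell_def
              using gg by (intro SUP_upper) (auto simp: less_max_iff_disj)
            also have "\<dots> \<le> Sup D" unfolding D_def
              using gg ab by (intro Sup_upper) (auto simp: max_def)
            finally show "A \<gamma> \<le> Sup D" .
          qed
          have "inf (ell A (S \<inter> {..<\<beta>})) (X \<alpha>) \<le> inf (X \<alpha>) (Sup D)"
            using sup by (metis inf_commute inf_mono order_refl)
          also have "\<dots> = (SUP d\<in>D. inf (X \<alpha>) d)"
            using ab5 dir unfolding upper_continuous_def by blast
          also have "\<dots> \<le> ell A (S \<inter> {..<\<alpha>})"
          proof (rule SUP_least)
            fix d assume "d \<in> D"
            then obtain \<delta> where dd: "\<delta> \<in> {\<alpha>..<\<beta>}" "d = ell A (S \<inter> {..<\<delta>})"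
              unfolding D_def by auto
            have "inf (ell A (S \<inter> {..<\<delta>})) (X \<alpha>) \<le> ell A (S \<inter> {..<\<alpha>})"
              using less.IH[of \<delta>] dd less.prems by auto
            then show "inf (X \<alpha>) d \<le> ell A (S \<inter> {..<\<alpha>})" using dd by (simp add: inf_commute)
          qed
          finally show ?thesis .
        qed
      qed
    qed
  qed
  show ?thesis
  proof (intro allI impI antisym)
    fix \<alpha> assume a: "\<alpha> < \<sigma>"
    have "S \<inter> {..<\<sigma>} = S" using Sl by auto
    then show "inf (ell A S) (X \<alpha>) \<le> ell A (S \<inter> {..<\<alpha>})"
      using main[of \<sigma>] a by auto
    show "ell A (S \<inter> {..<\<alpha>}) \<le> inf (ell A S) (X \<alpha>)"
      using ellX[of \<alpha>] a ell_mono[of "S \<inter> {..<\<alpha>}" S A] by auto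
  qed
qed

end
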